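(* Suppose $$S^{**}<\min\left\{\frac{\mu_1'-\mu_0}{\alpha_1},\ \frac{\mu_2'-\mu_0}{\alpha_2},\ \frac{\mu_3'-\mu_0}{\hat\alpha_3}\right\},$$ where $\hat\alpha_3=\alpha_3+\beta_1+\beta_2$. Then for every solution of the system below with nonnegative initial data and $S(0)>0$, $$\lim_{t\to\infty}I_1(t)=\lim_{t\to\infty}I_2(t)=\lim_{t\to\infty}I_{12}(t)=\lim_{t\to\infty}R(t)=0,\qquad \lim_{t\to\infty}S(t)=S^{**},$$ i.e. the disease-free equilibrium $G_2=(S^{**},0,0,0,0)$ is globally asymptotically stable (with respect to solutions with $S(0)>0$).
   Context: Consider, for $t\ge0$, the system $S'=\big(b(1-\tfrac{N}{K})-\alpha_1I_1-\alpha_2I_2-(\beta_1+\beta_2+\alpha_3)I_{12}-\mu_0\big)S$, $I_1'=\big(b(1-\tfrac{N}{K})+\alpha_1S-\eta_1I_{12}-\gamma_1I_2-\mu_1\big)I_1+\beta_1SI_{12}$, $I_2'=\big(b(1-\tfrac{N}{K})+\alpha_2S-\eta_2I_{12}-\gamma_2I_1-\mu_2\big)I_2+\beta_2SI_{12}$, $I_{12}'=\big(b(1-\tfrac{N}{K})+\alpha_3S+\eta_1I_1+\eta_2I_2-\mu_3\big)I_{12}+(\gamma_1+\gamma_2)I_1I_2$, $R'=\big(b(1-\tfrac{N}{K})-\mu_4'\big)R+\rho_1I_1+\rho_2I_2+\rho_3I_{12}$, where $N=S+I_1+I_2+I_{12}+R$. All parameters $b,K,\alpha_i,\beta_i,\gamma_i,\eta_i,\rho_i,\mu_0,\mu_i'$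 are positive and $\mu_i=\rho_i+\mu_i'$ for $i=1,2,3$. Standing assumptions: $b>\mu_0$, $b>\mu_i$ ($i=1,2,3$), $b>\mu_4'$, and $\mu_0<\mu_4'<\mu_j'$ for $j=1,2,3$. Set $\sigma_k=(\mu_k-\mu_0)/\alpha_k$ ($k=1,2,3$), assumed to satisfy $\sigma_1<\sigma_2<\sigma_3$, and $S^{**}=\frac{K}{b}(b-\mu_0)$. *)

theory Defs
  imports "HOL-Analysis.Analysis"
begin

end

theory Submission
  imports Defs
begin


lemma stay_below:
  fixes u u' :: "real \<Rightarrow> real"
  assumes der: "\<And>t. t \<ge> t0 \<Longrightarrow> (u has_real_derivative u' t) (at t)"
    and bnd: "\<And>t. t \<ge> t0 \<Longrightarrow> u t \<ge> a \<Longrightarrow> u' t \<le> 0"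
    and t1: "t1 \<ge> t0" "u t1 \<le> a"
  shows "\<And>t. t \<ge> t1 \<Longrightarrow> u t \<le> a"
proof (rule ccontr)
  fix t2 assume t2: "t2 \<ge> t1" and nt: "\<not> u t2 \<le> a"
  have cont: "continuous_on {t1..t2} u"
    by (rule continuous_at_imp_continuous_on) (meson DERIV_isCont der t1(1) order_trans atLeastAtMost_iff)
  define F where "F = {s \<in> {t1..t2}. u s \<le> (\<lambda>_. a) s}"
  have cl: "closed F" unfolding F_def
    by (rule continuous_on_closed_Collect_le[OF cont continuous_on_const]) simp
  have ne: "F \<noteq> {}" using t1 t2 by (auto simp: F_def)
  have bd: "bdd_above F" by (auto simp: F_def bdd_above_def)
  define s where "s = Sup F"
  have sF: "s \<in> F" using closed_contains_Sup[OF ne bd cl] s_def by simp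
  then have s: "t1 \<le> s" "s \<le> t2" "u s \<le> a" by (auto simp: F_def)
  have above: "u x > a" if "s < x" "x \<le> t2" for x
  proof (rule ccontr)
    assume "\<not> u x > a"
    then have "x \<in> F" using that s by (auto simp: F_def)
    then have "x \<le> s" unfolding s_def using bd by (rule cSup_upper)
    then show False using that by simp
  qed
  have "u t2 \<le> u s"
    apply (rule DERIV_nonpos_imp_decreasing_open[OF s(2)])
    subgoal for x using der[of x] bnd[of x] above[of x] s t1 by (intro exI[of _ "u' x"]) auto
    subgoal using cont by (rule continuous_on_subset) (use s in auto)
    done
  then show False using s nt by simp
qed

lemma barrier:
  fixes u u' :: "real \<Rightarrow> real"
  assumes der: "\<And>t. t \<ge> t0 \<Longrightarrow> (u has_real_derivative u' t) (at t)"
    and c: "c > 0"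
    and bnd: "\<And>t. t \<ge> t0 \<Longrightarrow> u t \<ge> a \<Longrightarrow> u' t \<le> - c"
  shows "\<exists>T. \<forall>t\<ge>T. u t \<le> a"
proof -
  define T1 where "T1 = t0 + max 0 ((u t0 - a) / c) + 1"
  have T1: "T1 > t0" unfolding T1_def by simp
  have "\<exists>t1. t0 \<le> t1 \<and> t1 \<le> T1 \<and> u t1 \<le> a"
  proof (rule ccontr)
    assume "\<not> ?thesis"
    then have gt: "\<And>t. t0 \<le> t \<Longrightarrow> t \<le> T1 \<Longrightarrow> u t > a" by force
    have "(\<lambda>t. u t + c * t) T1 \<le> (\<lambda>t. u t + c * t) t0"
    proof (rule DERIV_nonpos_imp_decreasing_open[of t0 T1 "\<lambda>t. u t + c * t"])
      show "t0 \<le> T1" using T1 by simp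
      show "\<exists>y. ((\<lambda>t. u t + c * t) has_real_derivative y) (at x) \<and> y \<le> 0" if "t0 < x" "x < T1" for x
        using that gt[of x] bnd[of x] by (intro exI[of _ "u' x + c"]) (auto intro!: derivative_eq_intros der)
      show "continuous_on {t0..T1} (\<lambda>t. u t + c * t)"
        by (intro continuous_at_imp_continuous_on ballI continuous_intros) (meson DERIV_isCont der atLeastAtMost_iff)
    qed
    then have A: "u T1 \<le> u t0 - c * (T1 - t0)" by (simp add: algebra_simps)
    have "c * (T1 - t0) \<ge> c * ((u t0 - a) / c + 1)"
      using c unfolding T1_def by (intro mult_left_mono) auto
    moreover have "c * ((u t0 - a) / c + 1) = u t0 - a + c" using c by (simp add: field_simps)
    ultimately have "u t0 - c * (T1 - t0) \<le> a - c" by linarith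
    then show False using A gt[of T1] T1 c by simp
  qed
  then obtain t1 where t1: "t0 \<le> t1" "u t1 \<le> a" by auto
  have "\<forall>t\<ge>t1. u t \<le> a"
    using stay_below[OF der _ t1] bnd c by (smt (verit))
  then show ?thesis by blast
qed



lemma deriv_at_of_within:
  assumes "(f has_real_derivative D) (at t within {0..})" "t > 0"
  shows "(f has_real_derivative D) (at t)"
proof -
  have "t \<in> interior {0..}" using assms(2) interior_Ici[of "-1::real" 0] by simp
  then have "at t within {0..} = at t" by (rule at_within_interior)
  then show ?thesis using assms(1) by metis
qed

lemma cont_of_deriv:
  assumes "\<And>t. t \<ge> 0 \<Longrightarrow> (f has_real_derivative D t) (at t within {0..})"
  shows "continuous_on {0..T} f"
  by (rule DERIV_continuous_on, rule DERIV_subset[OF assms]) auto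

lemma quasi_pos:
  fixes x x' :: "nat \<Rightarrow> real \<Rightarrow> real"
  assumes L: "L \<ge> 0"
    and der: "\<And>i t. i < n \<Longrightarrow> 0 \<le> t \<Longrightarrow> t \<le> T \<Longrightarrow> (x i has_real_derivative x' i t) (at t within {0..})"
    and init: "\<And>i. i < n \<Longrightarrow> x i 0 \<ge> 0"
    and qp: "\<And>i t e. i < n \<Longrightarrow> 0 \<le> t \<Longrightarrow> t \<le> T \<Longrightarrow> e > 0 \<Longrightarrow> (\<forall>j<n. x j t \<ge> -e)
               \<Longrightarrow> x i t = -e \<Longrightarrow> x' i t \<ge> -L*e"
    and i: "i < n" and t: "0 \<le> t" "t \<le> T"
  shows "x i t \<ge> 0"
proof -
  have step: "x i t + \<epsilon> * exp ((L+1) * t) > 0"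
    if eps: "\<epsilon> > 0" and i: "i < n" and t: "0 \<le> t" "t \<le> T" for \<epsilon> i t
  proof (rule ccontr)
    assume nt: "\<not> ?thesis"
    define g where "g = (\<lambda>i t. x i t + \<epsilon> * exp ((L+1) * t))"
    have gder: "(g i has_real_derivative (x' i t + \<epsilon> * ((L+1) * exp ((L+1) * t)))) (at t within {0..})"
      if "i < n" "0 \<le> t" "t \<le> T" for i t
    proof -
      have "((\<lambda>t. \<epsilon> * exp ((L+1) * t)) has_real_derivative \<epsilon> * ((L+1) * exp ((L+1) * t))) (at t)"
        by (auto intro!: derivative_eq_intros)
      from DERIV_add[OF der[OF that] has_field_derivative_at_within[OF this]]
      show ?thesis unfolding g_def .
    qed
    have gcont: "continuous_on {0..T} (g i)" if "i < n" for i
      by (rule DERIV_continuous_on[where D="\<lambda>t. x' i t + \<epsilon> * ((L+1) * exp ((L+1) * t))"])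
         (rule DERIV_subset[OF gder], use that in \<open>simp_all add: atLeastAtMost_iff\<close>)
    define F where "F = (\<Union>i<n. {t \<in> {0..T}. g i t \<le> (\<lambda>_. 0) t})"
    have cl: "closed F" unfolding F_def
    proof (rule closed_UN)
      show "finite {..<n}" by simp
      show "\<forall>i\<in>{..<n}. closed {t \<in> {0..T}. g i t \<le> (\<lambda>_. 0) t}"
      proof
        fix i assume "i \<in> {..<n}"
        then have "i < n" by simp
        show "closed {t \<in> {0..T}. g i t \<le> (\<lambda>_. 0) t}"
          by (rule continuous_on_closed_Collect_le[OF gcont[OF \<open>i < n\<close>] continuous_on_const closed_atLeastAtMost])
      qed
    qed
    have ne: "F \<noteq> {}" using nt i t unfolding F_def g_def by force
    have bd: "bdd_below F" by (auto simp: F_def bdd_below_def)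
    define s where "s = Inf F"
    have sF: "s \<in> F" using closed_contains_Inf[OF ne bd cl] s_def by simp
    then obtain k where k: "k < n" "0 \<le> s" "s \<le> T" "g k s \<le> 0" by (auto simp: F_def)
    have before: "g j r > 0" if "j < n" "0 \<le> r" "r < s" for j r
    proof (rule ccontr)
      assume "\<not> g j r > 0"
      then have "r \<in> F" unfolding F_def using that k by (auto intro!: bexI[of _ j])
      then have "s \<le> r" unfolding s_def using bd by (rule cInf_lower)
      then show False using that by simp
    qed
    have "s \<noteq> 0"
    proof
      assume "s = 0"
      then have "g k 0 \<le> 0" using k by simp
      moreover have "g k 0 > 0" using init[OF k(1)] eps by (simp add: g_def)
      ultimately show False by simp
    qed
    then have s0: "s > 0" using k by simp
    have gat: "(g j has_real_derivative (x' j s + \<epsilon> * ((L+1) * exp ((L+1) * s)))) (at s)" if "j < n" for j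
      by (rule deriv_at_of_within[OF gder[OF that k(2,3)] s0])
    have gs: "g j s \<ge> 0" if j: "j < n" for j
    proof -
      have "(g j \<longlongrightarrow> g j s) (at s)" using DERIV_isCont[OF gat[OF j]] by (simp add: isCont_def)
      then have lim: "(g j \<longlongrightarrow> g j s) (at_left s)" by (rule tendsto_mono[OF at_le[OF subset_UNIV]])
      have "eventually (\<lambda>r. r \<in> {0<..<s}) (at_left s)" using s0 by (rule eventually_at_left_real)
      then have "eventually (\<lambda>r. 0 \<le> g j r) (at_left s)"
        by eventually_elim (use before[OF j] in \<open>auto intro: less_imp_le\<close>)
      then show ?thesis by (rule tendsto_lowerbound[OF lim]) (simp add: trivial_limit_at_left_real)
    qed
    define e where "e = \<epsilon> * exp ((L+1) * s)"
    have e0: "e > 0" using eps by (simp add: e_def)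
    have xk: "x k s = -e" using gs[OF k(1)] k(4) by (simp add: g_def e_def)
    have xj: "\<forall>j<n. x j s \<ge> -e"
    proof (intro allI impI)
      fix j assume "j < n"
      from gs[OF this] show "x j s \<ge> -e" unfolding g_def e_def by linarith
    qed
    have "x' k s \<ge> -L*e" by (rule qp[OF k(1) k(2) k(3) e0 xj xk])
    moreover have "\<epsilon> * ((L+1) * exp ((L+1) * s)) = L*e + e" by (simp add: e_def algebra_simps)
    ultimately have pos: "x' k s + \<epsilon> * ((L+1) * exp ((L+1) * s)) > 0"
      using e0 by linarith
    obtain d where d: "d > 0" "\<And>h. h > 0 \<Longrightarrow> h < d \<Longrightarrow> g k (s - h) < g k s"
      using DERIV_pos_inc_left[OF gat[OF k(1)] pos] by auto
    define h where "h = min (d/2) (s/2)"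
    have h: "h > 0" "h < d" "h < s" "h \<le> s" using d s0 by (auto simp: h_def)
    have "g k (s - h) < g k s" using d(2)[OF h(1,2)] .
    moreover have "g k (s - h) > 0" using before[OF k(1), of "s - h"] h by simp
    ultimately show False using k(4) by simp
  qed
  show ?thesis
  proof (rule ccontr)
    assume neg: "\<not> x i t \<ge> 0"
    define \<epsilon> where "\<epsilon> = - x i t / exp ((L+1) * t)"
    have "\<epsilon> > 0" using neg unfolding \<epsilon>_def by (intro divide_pos_pos) auto
    from step[OF this i t] have "x i t + \<epsilon> * exp ((L + 1) * t) > 0" .
    moreover have "\<epsilon> * exp ((L + 1) * t) = - x i t" by (simp add: \<epsilon>_def)
    ultimately show False by linarith
  qed
qed



lemma cbound: "\<bar>y\<bar> \<le> M \<Longrightarrow> (c::real) \<ge> 0 \<Longrightarrow> c*y \<le> c*M \<and> -(c*M) \<le> c*y"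
  by (smt (verit, best) abs_le_iff mult_left_mono mult_minus_right)

lemma prod_lb: "(a::real) \<ge> -e \<Longrightarrow> d \<ge> -e \<Longrightarrow> \<bar>a\<bar> \<le> M \<Longrightarrow> \<bar>d\<bar> \<le> M \<Longrightarrow> e > 0 \<Longrightarrow> a*d \<ge> -(M*e)"
proof -
  assume h: "a \<ge> -e" "d \<ge> -e" "\<bar>a\<bar> \<le> M" "\<bar>d\<bar> \<le> M" "e > 0"
  show ?thesis
  proof (cases "a \<ge> 0")
    case True
    show ?thesis
    proof (cases "d \<ge> 0")
      case True with \<open>a \<ge> 0\<close> h show ?thesis by (smt (verit) mult_nonneg_nonneg)
    next
      case False
      have "a*d \<ge> a*(-e)" using \<open>a \<ge> 0\<close> h by (intro mult_left_mono) auto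
      moreover have "a*(-e) \<ge> M*(-e)" using h \<open>a\<ge>0\<close> by (intro mult_right_mono_neg) auto
      ultimately show ?thesis by simp
    qed
  next
    case False
    show ?thesis
    proof (cases "d \<ge> 0")
      case True
      have "a*d \<ge> (-e)*d" using True h by (intro mult_right_mono) auto
      moreover have "(-e)*d \<ge> (-e)*M" using h True by (intro mult_left_mono_neg) auto
      ultimately have "a*d \<ge> -e*M" by linarith
      then show ?thesis by (simp add: mult.commute)
    next
      case F2: False
      with False have "a*d > 0" by (simp add: mult_neg_neg)
      moreover have "M \<ge> 0" using h by simp
      ultimately show ?thesis using h by (smt (verit) mult_nonneg_nonneg)
    qed
  qed
qed

lemma lb_comp: "(c::real) \<le> C \<Longrightarrow> x = -e \<Longrightarrow> e > 0 \<Longrightarrow> P \<ge> -(D*e) \<Longrightarrow> C + D \<le> L \<Longrightarrow> c*x + P \<ge> -(L*e)"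
proof -
  assume h: "c \<le> C" "x = -e" "e > 0" "P \<ge> -(D*e)" "C + D \<le> L"
  have "c*e \<le> C*e" using h by (intro mult_right_mono) auto
  moreover have "(C+D)*e \<le> L*e" using h by (intro mult_right_mono) auto
  moreover have "c*x = -(c*e)" using h by simp
  moreover have "(C+D)*e = C*e + D*e" by (simp add: algebra_simps)
  ultimately show ?thesis using h by linarith
qed

lemma bounded_on_Icc: "continuous_on {0..T} (f::real\<Rightarrow>real) \<Longrightarrow> \<exists>M. \<forall>s\<in>{0..T}. \<bar>f s\<bar> \<le> M"
  using compact_imp_bounded[OF compact_continuous_image[of "{0..T}" f]] by (auto simp: bounded_real)

lemma exp_decay: "(\<delta>::real) > 0 \<Longrightarrow> ((\<lambda>t. C * exp(-\<delta>*t)) \<longlongrightarrow> 0) at_top"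
proof -
  assume d: "\<delta> > 0"
  have "filterlim (\<lambda>t. \<delta>*t) at_top at_top"
    by (rule filterlim_tendsto_pos_mult_at_top[OF tendsto_const d filterlim_ident])
  then have "filterlim (\<lambda>t. -(\<delta>*t)) at_bot at_top" by (simp add: filterlim_uminus_at_top)
  then have "((\<lambda>t. exp(-(\<delta>*t))) \<longlongrightarrow> 0) at_top" by (rule filterlim_compose[OF exp_at_bot])
  then have "((\<lambda>t. C * exp(-(\<delta>*t))) \<longlongrightarrow> C * 0) at_top" by (intro tendsto_mult tendsto_const)
  then show ?thesis by simp
qed



lemma coef_bounds:
  fixes s i1 i2 i12 r M b K \<alpha>1 \<alpha>2 \<alpha>3 \<beta>1 \<beta>2 \<gamma>1 \<gamma>2 \<eta>1 \<eta>2 \<mu>0 \<mu>1 \<mu>2 \<mu>3 \<mu>4' :: real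
  assumes a: "\<bar>s\<bar> \<le> M" "\<bar>i1\<bar> \<le> M" "\<bar>i2\<bar> \<le> M" "\<bar>i12\<bar> \<le> M" "\<bar>r\<bar> \<le> M"
    and p: "b > 0" "K > 0" "\<alpha>1 > 0" "\<alpha>2 > 0" "\<alpha>3 > 0" "\<beta>1 > 0" "\<beta>2 > 0"
      "\<gamma>1 > 0" "\<gamma>2 > 0" "\<eta>1 > 0" "\<eta>2 > 0" "\<mu>0 > 0" "\<mu>1 > 0" "\<mu>2 > 0" "\<mu>3 > 0" "\<mu>4' > 0"
  defines "Cb \<equiv> b + (b/K)*(5*M) + (\<alpha>1+\<alpha>2+\<alpha>3+\<beta>1+\<beta>2+\<eta>1+\<eta>2+\<gamma>1+\<gamma>2)*M"
  shows "b*(1 - (s+i1+i2+i12+r)/K) - \<alpha>1*i1 - \<alpha>2*i2 - (\<beta>1+\<beta>2+\<alpha>3)*i12 - \<mu>0 \<le> Cb"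
    and "b*(1 - (s+i1+i2+i12+r)/K) + \<alpha>1* s - \<eta>1*i12 - \<gamma>1*i2 - \<mu>1 \<le> Cb"
    and "b*(1 - (s+i1+i2+i12+r)/K) + \<alpha>2* s - \<eta>2*i12 - \<gamma>2*i1 - \<mu>2 \<le> Cb"
    and "b*(1 - (s+i1+i2+i12+r)/K) + \<alpha>3* s + \<eta>1*i1 + \<eta>2*i2 - \<mu>3 \<le> Cb"
    and "b*(1 - (s+i1+i2+i12+r)/K) - \<mu>4' \<le> Cb"
proof -
  have B0: "b*(1 - n/K) = b - (b/K)*n" for n using p by (simp add: field_simps)
  have B: "b*(1 - (s+i1+i2+i12+r)/K) = b - (b/K)*(s+i1+i2+i12+r)" by (rule B0)
  have n: "\<bar>s+i1+i2+i12+r\<bar> \<le> 5*M" using a by linarith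
  have bK: "b/K \<ge> 0" using p by simp
  note c = cbound[OF n bK]
  note a1 = cbound[OF a(2), of \<alpha>1] cbound[OF a(3), of \<alpha>2] cbound[OF a(4), of "\<beta>1+\<beta>2+\<alpha>3"]
    cbound[OF a(1), of \<alpha>1] cbound[OF a(4), of \<eta>1] cbound[OF a(3), of \<gamma>1]
    cbound[OF a(1), of \<alpha>2] cbound[OF a(4), of \<eta>2] cbound[OF a(2), of \<gamma>2]
    cbound[OF a(1), of \<alpha>3] cbound[OF a(2), of \<eta>1] cbound[OF a(3), of \<eta>2]
  have M0: "M \<ge> 0" using a by linarith
  have e: "Cb = b + (b/K)*(5*M) + \<alpha>1*M+\<alpha>2*M+\<alpha>3*M+\<beta>1*M+\<beta>2*M+\<eta>1*M+\<eta>2*M+\<gamma>1*M+\<gamma>2*M"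
    unfolding Cb_def by (simp add: algebra_simps)
  have pos: "\<alpha>1*M \<ge> 0" "\<alpha>2*M \<ge> 0" "\<alpha>3*M \<ge> 0" "\<beta>1*M \<ge> 0" "\<beta>2*M \<ge> 0" "\<eta>1*M \<ge> 0"
    "\<eta>2*M \<ge> 0" "\<gamma>1*M \<ge> 0" "\<gamma>2*M \<ge> 0" "(b/K)*(5*M) \<ge> 0" using p M0 by auto
  have bb: "(\<beta>1+\<beta>2+\<alpha>3)*M = \<beta>1*M+\<beta>2*M+\<alpha>3*M" by (simp add: algebra_simps)
  show "b*(1 - (s+i1+i2+i12+r)/K) - \<alpha>1*i1 - \<alpha>2*i2 - (\<beta>1+\<beta>2+\<alpha>3)*i12 - \<mu>0 \<le> Cb"
    using B c a1 e pos bb p by linarith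
  show "b*(1 - (s+i1+i2+i12+r)/K) + \<alpha>1* s - \<eta>1*i12 - \<gamma>1*i2 - \<mu>1 \<le> Cb"
    using B c a1 e pos p by linarith
  show "b*(1 - (s+i1+i2+i12+r)/K) + \<alpha>2* s - \<eta>2*i12 - \<gamma>2*i1 - \<mu>2 \<le> Cb"
    using B c a1 e pos p by linarith
  show "b*(1 - (s+i1+i2+i12+r)/K) + \<alpha>3* s + \<eta>1*i1 + \<eta>2*i2 - \<mu>3 \<le> Cb"
    using B c a1 e pos p by linarith
  show "b*(1 - (s+i1+i2+i12+r)/K) - \<mu>4' \<le> Cb"
    using B c a1 e pos p by linarith
qed

lemma g_lower:
  fixes s i1 i2 i12 r M b K \<alpha>1 \<alpha>2 \<alpha>3 \<beta>1 \<beta>2 \<mu>0 :: real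
  assumes a: "0 \<le> s" "s \<le> M" "0 \<le> i1" "i1 \<le> M" "0 \<le> i2" "i2 \<le> M" "0 \<le> i12" "i12 \<le> M" "0 \<le> r" "r \<le> M"
    and p: "b > 0" "K > 0" "\<alpha>1 > 0" "\<alpha>2 > 0" "\<alpha>3 > 0" "\<beta>1 > 0" "\<beta>2 > 0"
  shows "b*(1 - (s+i1+i2+i12+r)/K) - \<alpha>1*i1 - \<alpha>2*i2 - (\<beta>1+\<beta>2+\<alpha>3)*i12 - \<mu>0
     \<ge> -((b/K)*(5*M) + (\<alpha>1+\<alpha>2+\<alpha>3+\<beta>1+\<beta>2)*M + \<mu>0)"
proof -
  have B0: "b*(1 - n/K) = b - (b/K)*n" for n using p by (simp add: field_simps)
  have B: "b*(1 - (s+i1+i2+i12+r)/K) = b - (b/K)*(s+i1+i2+i12+r)" by (rule B0)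
  have n: "\<bar>s+i1+i2+i12+r\<bar> \<le> 5*M" using a by linarith
  have bK: "b/K \<ge> 0" using p by simp
  note c = cbound[OF n bK]
  have ab: "\<bar>i1\<bar> \<le> M" "\<bar>i2\<bar> \<le> M" "\<bar>i12\<bar> \<le> M" using a by auto
  note a1 = cbound[OF ab(1), of \<alpha>1] cbound[OF ab(2), of \<alpha>2] cbound[OF ab(3), of "\<beta>1+\<beta>2+\<alpha>3"]
  have e: "(\<alpha>1+\<alpha>2+\<alpha>3+\<beta>1+\<beta>2)*M = \<alpha>1*M + \<alpha>2*M + (\<beta>1+\<beta>2+\<alpha>3)*M" by (simp add: algebra_simps)
  show ?thesis using B c a1 e p by linarith
qed

lemma N_ident:
  fixes B s i1 i2 i12 r :: real
  assumes "\<mu>1 = \<rho>1 + \<mu>1'" "\<mu>2 = \<rho>2 + \<mu>2'" "\<mu>3 = \<rho>3 + \<mu>3'"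
  shows "(B - \<alpha>1*i1 - \<alpha>2*i2 - (\<beta>1+\<beta>2+\<alpha>3)*i12 - \<mu>0)* s
     + ((B + \<alpha>1* s - \<eta>1*i12 - \<gamma>1*i2 - \<mu>1)*i1 + \<beta>1* s*i12)
     + ((B + \<alpha>2* s - \<eta>2*i12 - \<gamma>2*i1 - \<mu>2)*i2 + \<beta>2* s*i12)
     + ((B + \<alpha>3* s + \<eta>1*i1 + \<eta>2*i2 - \<mu>3)*i12 + (\<gamma>1+\<gamma>2)*i1*i2)
     + ((B - \<mu>4')*r + \<rho>1*i1 + \<rho>2*i2 + \<rho>3*i12)
   = B*(s+i1+i2+i12+r) - \<mu>0* s - \<mu>1'*i1 - \<mu>2'*i2 - \<mu>3'*i12 - \<mu>4'*r"
  unfolding assms by (simp add: algebra_simps)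

lemma V_ident:
  fixes B s i1 i2 i12 r :: real
  assumes "\<mu>1 = \<rho>1 + \<mu>1'" "\<mu>2 = \<rho>2 + \<mu>2'" "\<mu>3 = \<rho>3 + \<mu>3'"
  shows "(((B + \<alpha>1* s - \<eta>1*i12 - \<gamma>1*i2 - \<mu>1)*i1 + \<beta>1* s*i12)
     + ((B + \<alpha>2* s - \<eta>2*i12 - \<gamma>2*i1 - \<mu>2)*i2 + \<beta>2* s*i12)
     + ((B + \<alpha>3* s + \<eta>1*i1 + \<eta>2*i2 - \<mu>3)*i12 + (\<gamma>1+\<gamma>2)*i1*i2)
     + ((B - \<mu>4')*r + \<rho>1*i1 + \<rho>2*i2 + \<rho>3*i12)) * s
     - (i1+i2+i12+r) * ((B - \<alpha>1*i1 - \<alpha>2*i2 - (\<beta>1+\<beta>2+\<alpha>3)*i12 - \<mu>0)* s)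
   = s * ((s+i1+i2+i12+r)*(\<alpha>1*i1 + \<alpha>2*i2 + (\<alpha>3+\<beta>1+\<beta>2)*i12)
        - (\<mu>1'-\<mu>0)*i1 - (\<mu>2'-\<mu>0)*i2 - (\<mu>3'-\<mu>0)*i12 - (\<mu>4'-\<mu>0)*r)"
  unfolding assms by (simp add: algebra_simps)

lemma N_bound:
  fixes n s i1 i2 i12 r b K \<mu>0 S2 \<epsilon> :: real
  assumes "n = s+i1+i2+i12+r" "0 \<le> s" "0 \<le> i1" "0 \<le> i2" "0 \<le> i12" "0 \<le> r"
    "\<mu>0 \<le> \<mu>1'" "\<mu>0 \<le> \<mu>2'" "\<mu>0 \<le> \<mu>3'" "\<mu>0 \<le> \<mu>4'" "b > 0" "K > 0" "S2 = K / b * (b - \<mu>0)"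
    "n \<ge> S2 + \<epsilon>" "\<epsilon> > 0" "S2 > 0"
  shows "b*(1 - n/K)*n - \<mu>0* s - \<mu>1'*i1 - \<mu>2'*i2 - \<mu>3'*i12 - \<mu>4'*r \<le> -((b/K)*(S2+\<epsilon>)*\<epsilon>)"
proof -
  have m: "\<mu>1'*i1 \<ge> \<mu>0*i1" "\<mu>2'*i2 \<ge> \<mu>0*i2" "\<mu>3'*i12 \<ge> \<mu>0*i12" "\<mu>4'*r \<ge> \<mu>0*r"
    using assms by (auto intro: mult_right_mono)
  have "\<mu>0*n = \<mu>0* s + \<mu>0*i1 + \<mu>0*i2 + \<mu>0*i12 + \<mu>0*r" using assms(1) by (simp add: algebra_simps)
  then have "b*(1 - n/K)*n - \<mu>0* s - \<mu>1'*i1 - \<mu>2'*i2 - \<mu>3'*i12 - \<mu>4'*r \<le> b*(1 - n/K)*n - \<mu>0*n"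
    using m by linarith
  also have "\<dots> = (b - \<mu>0 - (b/K)*n)*n" using \<open>K > 0\<close> by (simp add: field_simps)
  also have h: "b - \<mu>0 = (b/K)*S2" using \<open>S2 = K / b * (b - \<mu>0)\<close> \<open>K > 0\<close> \<open>b > 0\<close> by simp
  have "(b - \<mu>0 - (b/K)*n)*n = ((b/K)*S2 - (b/K)*n)*n" by (simp only: h)
  also have "\<dots> = (b/K)*(S2 - n)*n" by (simp only: right_diff_distrib)
  also have "\<dots> \<le> (b/K)*(-\<epsilon>)*(S2+\<epsilon>)"
  proof -
    have "(S2 - n)*n \<le> (-\<epsilon>)*n" using assms by (intro mult_right_mono) auto
    also have "\<dots> \<le> (-\<epsilon>)*(S2+\<epsilon>)" using assms by (intro mult_left_mono_neg) auto
    finally have "(S2 - n)*n \<le> (-\<epsilon>)*(S2+\<epsilon>)" .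
    then have "(b/K)*((S2 - n)*n) \<le> (b/K)*((-\<epsilon>)*(S2+\<epsilon>))" using assms by (intro mult_left_mono) auto
    then show ?thesis by (simp add: mult.assoc)
  qed
  finally show ?thesis by (simp add: algebra_simps)
qed

lemma scale_lemma: "(x::real) \<le> a/\<alpha> - e \<Longrightarrow> \<alpha> > 0 \<Longrightarrow> x*\<alpha> \<le> a - e*\<alpha>"
proof -
  assume h: "x \<le> a/\<alpha> - e" "\<alpha> > 0"
  have "x*\<alpha> \<le> (a/\<alpha> - e)*\<alpha>" using h by (intro mult_right_mono) auto
  also have "\<dots> = a - e*\<alpha>" using h by (simp add: field_simps)
  finally show ?thesis .
qed

lemma Q_bound:
  fixes n i1 i2 i12 r X \<delta> :: real
  assumes "0 \<le> n" "n \<le> X" "0 \<le> i1" "0 \<le> i2" "0 \<le> i12" "0 \<le> r"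
    "\<alpha>1 > 0" "\<alpha>2 > 0" "\<alpha>3' > 0"
    "X*\<alpha>1 \<le> \<mu>1' - \<mu>0 - \<delta>" "X*\<alpha>2 \<le> \<mu>2' - \<mu>0 - \<delta>" "X*\<alpha>3' \<le> \<mu>3' - \<mu>0 - \<delta>"
    "\<delta> \<le> \<mu>4' - \<mu>0"
  shows "n*(\<alpha>1*i1 + \<alpha>2*i2 + \<alpha>3'*i12) - (\<mu>1'-\<mu>0)*i1 - (\<mu>2'-\<mu>0)*i2 - (\<mu>3'-\<mu>0)*i12
     - (\<mu>4'-\<mu>0)*r + \<delta>*(i1+i2+i12+r) \<le> 0"
proof -
  have a: "n*\<alpha>1 \<le> X*\<alpha>1" "n*\<alpha>2 \<le> X*\<alpha>2" "n*\<alpha>3' \<le> X*\<alpha>3'"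
    using assms by (auto intro: mult_right_mono)
  have "(n*\<alpha>1 - (\<mu>1'-\<mu>0) + \<delta>)*i1 \<le> 0" by (rule mult_nonpos_nonneg) (use a assms in linarith)+
  moreover have "(n*\<alpha>2 - (\<mu>2'-\<mu>0) + \<delta>)*i2 \<le> 0" by (rule mult_nonpos_nonneg) (use a assms in linarith)+
  moreover have "(n*\<alpha>3' - (\<mu>3'-\<mu>0) + \<delta>)*i12 \<le> 0" by (rule mult_nonpos_nonneg) (use a assms in linarith)+
  moreover have "(\<delta> - (\<mu>4'-\<mu>0))*r \<le> 0" by (rule mult_nonpos_nonneg) (use assms in linarith)+
  ultimately show ?thesis by (simp add: algebra_simps)
qed


theorem mainTheorem6:
  fixes b K \<alpha>1 \<alpha>2 \<alpha>3 \<beta>1 \<beta>2 \<gamma>1 \<gamma>2 \<eta>1 \<eta>2 \<rho>1 \<rho>2 \<rho>3 :: real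
    and \<mu>0 \<mu>1' \<mu>2' \<mu>3' \<mu>4' \<mu>1 \<mu>2 \<mu>3 :: real
    and S I1 I2 I12 R :: "real \<Rightarrow> real"
  assumes pos: "b > 0" "K > 0" "\<alpha>1 > 0" "\<alpha>2 > 0" "\<alpha>3 > 0" "\<beta>1 > 0" "\<beta>2 > 0"
      "\<gamma>1 > 0" "\<gamma>2 > 0" "\<eta>1 > 0" "\<eta>2 > 0" "\<rho>1 > 0" "\<rho>2 > 0" "\<rho>3 > 0"
      "\<mu>0 > 0" "\<mu>1' > 0" "\<mu>2' > 0" "\<mu>3' > 0" "\<mu>4' > 0"
    and mu_def: "\<mu>1 = \<rho>1 + \<mu>1'" "\<mu>2 = \<rho>2 + \<mu>2'" "\<mu>3 = \<rho>3 + \<mu>3'"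
    and standing: "b > \<mu>0" "b > \<mu>1" "b > \<mu>2" "b > \<mu>3" "b > \<mu>4'"
      "\<mu>0 < \<mu>4'" "\<mu>4' < \<mu>1'" "\<mu>4' < \<mu>2'" "\<mu>4' < \<mu>3'"
    and sigma_order: "(\<mu>1 - \<mu>0) / \<alpha>1 < (\<mu>2 - \<mu>0) / \<alpha>2"
      "(\<mu>2 - \<mu>0) / \<alpha>2 < (\<mu>3 - \<mu>0) / \<alpha>3"
    and threshold: "K / b * (b - \<mu>0) < Min {(\<mu>1' - \<mu>0) / \<alpha>1, (\<mu>2' - \<mu>0) / \<alpha>2,
                        (\<mu>3' - \<mu>0) / (\<alpha>3 + \<beta>1 + \<beta>2)}"
    and dS: "\<And>t. t \<ge> 0 \<Longrightarrow> (S has_real_derivative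
        ((b * (1 - (S t + I1 t + I2 t + I12 t + R t) / K) - \<alpha>1 * I1 t - \<alpha>2 * I2 t
          - (\<beta>1 + \<beta>2 + \<alpha>3) * I12 t - \<mu>0) * S t)) (at t within {0..})"
    and dI1: "\<And>t. t \<ge> 0 \<Longrightarrow> (I1 has_real_derivative
        ((b * (1 - (S t + I1 t + I2 t + I12 t + R t) / K) + \<alpha>1 * S t - \<eta>1 * I12 t
          - \<gamma>1 * I2 t - \<mu>1) * I1 t + \<beta>1 * S t * I12 t)) (at t within {0..})"
    and dI2: "\<And>t. t \<ge> 0 \<Longrightarrow> (I2 has_real_derivative
        ((b * (1 - (S t + I1 t + I2 t + I12 t + R t) / K) + \<alpha>2 * S t - \<eta>2 * I12 t
          - \<gamma>2 * I1 t - \<mu>2) * I2 t + \<beta>2 * S t * I12 t)) (at t within {0..})"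
    and dI12: "\<And>t. t \<ge> 0 \<Longrightarrow> (I12 has_real_derivative
        ((b * (1 - (S t + I1 t + I2 t + I12 t + R t) / K) + \<alpha>3 * S t + \<eta>1 * I1 t
          + \<eta>2 * I2 t - \<mu>3) * I12 t + (\<gamma>1 + \<gamma>2) * I1 t * I2 t)) (at t within {0..})"
    and dR: "\<And>t. t \<ge> 0 \<Longrightarrow> (R has_real_derivative
        ((b * (1 - (S t + I1 t + I2 t + I12 t + R t) / K) - \<mu>4') * R t
          + \<rho>1 * I1 t + \<rho>2 * I2 t + \<rho>3 * I12 t)) (at t within {0..})"
    and init: "S 0 > 0" "I1 0 \<ge> 0" "I2 0 \<ge> 0" "I12 0 \<ge> 0" "R 0 \<ge> 0"
  shows "(I1 \<longlongrightarrow> 0) at_top \<and> (I2 \<longlongrightarrow> 0) at_top \<and> (I12 \<longlongrightarrow> 0) at_top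
       \<and> (R \<longlongrightarrow> 0) at_top \<and> (S \<longlongrightarrow> K / b * (b - \<mu>0)) at_top"
proof -
  note p = pos
  define N where "N = (\<lambda>t. S t + I1 t + I2 t + I12 t + R t)"
  define S2 where "S2 = K / b * (b - \<mu>0)"
  have S2pos: "S2 > 0" using pos standing by (simp add: S2_def)
  have cont: "continuous_on {0..T} S" "continuous_on {0..T} I1" "continuous_on {0..T} I2"
     "continuous_on {0..T} I12" "continuous_on {0..T} R" for T
    using cont_of_deriv[OF dS] cont_of_deriv[OF dI1] cont_of_deriv[OF dI2] cont_of_deriv[OF dI12]
      cont_of_deriv[OF dR] by auto
  have bnds: "\<exists>M\<ge>0. \<forall>s\<in>{0..T}. \<bar>S s\<bar> \<le> M \<and> \<bar>I1 s\<bar> \<le> M \<and> \<bar>I2 s\<bar> \<le> M \<and> \<bar>I12 s\<bar> \<le> M \<and> \<bar>R s\<bar> \<le> M"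
    for T
  proof -
    obtain M1 where M1: "\<forall>s\<in>{0..T}. \<bar>S s\<bar> \<le> M1" using bounded_on_Icc[OF cont(1)] by blast
    obtain M2 where M2: "\<forall>s\<in>{0..T}. \<bar>I1 s\<bar> \<le> M2" using bounded_on_Icc[OF cont(2)] by blast
    obtain M3 where M3: "\<forall>s\<in>{0..T}. \<bar>I2 s\<bar> \<le> M3" using bounded_on_Icc[OF cont(3)] by blast
    obtain M4 where M4: "\<forall>s\<in>{0..T}. \<bar>I12 s\<bar> \<le> M4" using bounded_on_Icc[OF cont(4)] by blast
    obtain M5 where M5: "\<forall>s\<in>{0..T}. \<bar>R s\<bar> \<le> M5" using bounded_on_Icc[OF cont(5)] by blast
    define M where "M = max 0 (max (max M1 M2) (max (max M3 M4) M5))"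
    have "M \<ge> 0" by (simp add: M_def)
    moreover have "\<forall>s\<in>{0..T}. \<bar>S s\<bar> \<le> M \<and> \<bar>I1 s\<bar> \<le> M \<and> \<bar>I2 s\<bar> \<le> M \<and> \<bar>I12 s\<bar> \<le> M \<and> \<bar>R s\<bar> \<le> M"
      using M1 M2 M3 M4 M5 unfolding M_def by fastforce
    ultimately show ?thesis by blast
  qed
  have nonneg: "S t \<ge> 0 \<and> I1 t \<ge> 0 \<and> I2 t \<ge> 0 \<and> I12 t \<ge> 0 \<and> R t \<ge> 0" if t: "t \<ge> 0" for t
  proof -
    obtain M where M0: "M \<ge> 0" and M: "\<And>s. s\<in>{0..t} \<Longrightarrow> \<bar>S s\<bar> \<le> M \<and> \<bar>I1 s\<bar> \<le> M \<and> \<bar>I2 s\<bar> \<le> M \<and> \<bar>I12 s\<bar> \<le> M \<and> \<bar>R s\<bar> \<le> M"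
      using bnds[of t] by blast
    define Cb where "Cb = b + (b/K)*(5*M) + (\<alpha>1+\<alpha>2+\<alpha>3+\<beta>1+\<beta>2+\<eta>1+\<eta>2+\<gamma>1+\<gamma>2)*M"
    define L where "L = Cb + (\<beta>1+\<beta>2+\<gamma>1+\<gamma>2)*M + (\<rho>1+\<rho>2+\<rho>3)"
    have Cb0: "Cb \<ge> 0" using p M0 by (simp add: Cb_def)
    have L0: "L \<ge> 0" using p M0 Cb0 by (simp add: L_def)
    define x where "x = (\<lambda>i::nat. [S, I1, I2, I12, R] ! i)"
    define x' where "x' = (\<lambda>i::nat. \<lambda>s. [
        (b * (1 - (S s + I1 s + I2 s + I12 s + R s) / K) - \<alpha>1 * I1 s - \<alpha>2 * I2 s
          - (\<beta>1 + \<beta>2 + \<alpha>3) * I12 s - \<mu>0) * S s,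
        (b * (1 - (S s + I1 s + I2 s + I12 s + R s) / K) + \<alpha>1 * S s - \<eta>1 * I12 s
          - \<gamma>1 * I2 s - \<mu>1) * I1 s + \<beta>1 * S s * I12 s,
        (b * (1 - (S s + I1 s + I2 s + I12 s + R s) / K) + \<alpha>2 * S s - \<eta>2 * I12 s
          - \<gamma>2 * I1 s - \<mu>2) * I2 s + \<beta>2 * S s * I12 s,
        (b * (1 - (S s + I1 s + I2 s + I12 s + R s) / K) + \<alpha>3 * S s + \<eta>1 * I1 s
          + \<eta>2 * I2 s - \<mu>3) * I12 s + (\<gamma>1 + \<gamma>2) * I1 s * I2 s,
        (b * (1 - (S s + I1 s + I2 s + I12 s + R s) / K) - \<mu>4') * R s
          + \<rho>1 * I1 s + \<rho>2 * I2 s + \<rho>3 * I12 s] ! i)"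
    have i5: "i < 5 \<Longrightarrow> i = 0 \<or> i = 1 \<or> i = 2 \<or> i = 3 \<or> i = 4" for i :: nat by auto
    have xs: "x 0 = S" "x 1 = I1" "x (Suc 0) = I1" "x 2 = I2" "x 3 = I12" "x 4 = R" by (simp_all add: x_def)
    have der: "(x i has_real_derivative x' i s) (at s within {0..})" if "i < 5" "0 \<le> s" "s \<le> t" for i s
      using i5[OF that(1)] dS[OF that(2)] dI1[OF that(2)] dI2[OF that(2)] dI12[OF that(2)] dR[OF that(2)]
      by (auto simp: x_def x'_def)
    have init: "x i 0 \<ge> 0" if "i < 5" for i
      using i5[OF that] init by (auto simp: x_def)
    have qp: "x' i s \<ge> -L*e" if qi: "i < 5" and s: "0 \<le> s" "s \<le> t" and e: "e > 0"
       and allj: "\<forall>j<5. x j s \<ge> -e" and xi: "x i s = -e" for i s e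
    proof -
      have ge: "S s \<ge> -e" "I1 s \<ge> -e" "I2 s \<ge> -e" "I12 s \<ge> -e" "R s \<ge> -e"
        using allj[rule_format, of 0] allj[rule_format, of 1] allj[rule_format, of 2]
          allj[rule_format, of 3] allj[rule_format, of 4] by (simp_all add: xs)
      have Ms: "\<bar>S s\<bar> \<le> M" "\<bar>I1 s\<bar> \<le> M" "\<bar>I2 s\<bar> \<le> M" "\<bar>I12 s\<bar> \<le> M" "\<bar>R s\<bar> \<le> M"
        using M[of s] s by auto
      note cb = coef_bounds[OF Ms p(1,2,3,4,5,6,7,8,9,10,11,15), of \<mu>1 \<mu>2 \<mu>3 \<mu>4', folded Cb_def]
      have m123: "\<mu>1 > 0" "\<mu>2 > 0" "\<mu>3 > 0" using mu_def p by auto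
      note cb = cb[OF m123 p(19)]
      have pr1: "\<beta>1 * S s * I12 s \<ge> -((\<beta>1*M)*e)"
        using mult_left_mono[OF prod_lb[OF ge(1) ge(4) Ms(1) Ms(4) e], of \<beta>1] p by (simp add: mult.assoc)
      have pr2: "\<beta>2 * S s * I12 s \<ge> -((\<beta>2*M)*e)"
        using mult_left_mono[OF prod_lb[OF ge(1) ge(4) Ms(1) Ms(4) e], of \<beta>2] p by (simp add: mult.assoc)
      have pr3: "(\<gamma>1 + \<gamma>2) * I1 s * I2 s \<ge> -(((\<gamma>1 + \<gamma>2)*M)*e)"
        using mult_left_mono[OF prod_lb[OF ge(2) ge(3) Ms(2) Ms(3) e], of "\<gamma>1 + \<gamma>2"] p by (simp add: mult.assoc)
      have pr4: "\<rho>1 * I1 s + \<rho>2 * I2 s + \<rho>3 * I12 s \<ge> -((\<rho>1+\<rho>2+\<rho>3)*e)"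
      proof -
        have "\<rho>1 * I1 s \<ge> \<rho>1 * (-e)" by (rule mult_left_mono[OF ge(2)]) (use p in simp)
        moreover have "\<rho>2 * I2 s \<ge> \<rho>2 * (-e)" by (rule mult_left_mono[OF ge(3)]) (use p in simp)
        moreover have "\<rho>3 * I12 s \<ge> \<rho>3 * (-e)" by (rule mult_left_mono[OF ge(4)]) (use p in simp)
        ultimately show ?thesis by (simp add: algebra_simps)
      qed
      have pr0: "(0::real) \<ge> -(0*e)" by simp
      have MM: "\<beta>1*M \<ge> 0" "\<beta>2*M \<ge> 0" "(\<gamma>1 + \<gamma>2)*M \<ge> 0" "\<rho>1+\<rho>2+\<rho>3 \<ge> 0" using p M0 by auto
      have Ls: "Cb + 0 \<le> L" "Cb + \<beta>1*M \<le> L" "Cb + \<beta>2*M \<le> L" "Cb + (\<gamma>1 + \<gamma>2)*M \<le> L"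
         "Cb + (\<rho>1+\<rho>2+\<rho>3) \<le> L"
        unfolding L_def using MM by (simp_all add: algebra_simps)
      have X: "x' i s \<ge> -(L*e)"
        using i5[OF qi]
      proof (elim disjE)
        assume "i = 0"
        then show ?thesis using lb_comp[OF cb(1) _ e pr0 Ls(1)] xi by (simp add: x_def x'_def)
      next
        assume "i = 1"
        then show ?thesis using lb_comp[OF cb(2) _ e pr1 Ls(2)] xi by (simp add: x_def x'_def)
      next
        assume "i = 2"
        then show ?thesis using lb_comp[OF cb(3) _ e pr2 Ls(3)] xi by (simp add: x_def x'_def)
      next
        assume "i = 3"
        then show ?thesis using lb_comp[OF cb(4) _ e pr3 Ls(4)] xi by (simp add: x_def x'_def)
      next
        assume "i = 4"
        then show ?thesis using lb_comp[OF cb(5) _ e pr4 Ls(5)] xi by (simp add: x_def x'_def add.assoc)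
      qed
      then show ?thesis by simp
    qed
    have "x i t \<ge> 0" if "i < 5" for i
      by (rule quasi_pos[OF L0 der init qp that t order_refl]) auto
    from this[of 0] this[of 1] this[of 2] this[of 3] this[of 4] show ?thesis by (simp add: xs)
  qed
  have Nt: "N t = S t + I1 t + I2 t + I12 t + R t" for t by (simp add: N_def)
  have Spos: "S t > 0" if t: "t \<ge> 0" for t
  proof (cases "t = 0")
    case True then show ?thesis using init by simp
  next
    case False
    with t have t0: "t > 0" by simp
    obtain M where M0: "M \<ge> 0" and M: "\<And>s. s\<in>{0..t} \<Longrightarrow> \<bar>S s\<bar> \<le> M \<and> \<bar>I1 s\<bar> \<le> M \<and> \<bar>I2 s\<bar> \<le> M \<and> \<bar>I12 s\<bar> \<le> M \<and> \<bar>R s\<bar> \<le> M"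
      using bnds[of t] by blast
    define C where "C = (b/K)*(5*M) + (\<alpha>1+\<alpha>2+\<alpha>3+\<beta>1+\<beta>2)*M + \<mu>0"
    define g where "g = (\<lambda>s. b * (1 - (S s + I1 s + I2 s + I12 s + R s) / K) - \<alpha>1 * I1 s - \<alpha>2 * I2 s
          - (\<beta>1 + \<beta>2 + \<alpha>3) * I12 s - \<mu>0)"
    have "(\<lambda>s. S s * exp (C* s)) 0 \<le> (\<lambda>s. S s * exp (C* s)) t"
    proof (rule DERIV_nonneg_imp_increasing_open[of 0 t "\<lambda>s. S s * exp (C* s)"])
      show "0 \<le> t" using t .
      show "\<exists>y. ((\<lambda>s. S s * exp (C* s)) has_real_derivative y) (at x) \<and> y \<ge> 0" if x: "0 < x" "x < t" for x
      proof -
        have dSx: "(S has_real_derivative g x * S x) (at x)"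
          unfolding g_def by (rule deriv_at_of_within[OF dS[OF less_imp_le[OF x(1)]] x(1)])
        have E: "((\<lambda>s. exp (C* s)) has_real_derivative exp (C*x) * C) (at x)"
          by (auto intro!: derivative_eq_intros)
        have D: "((\<lambda>s. S s * exp (C* s)) has_real_derivative (S x * exp (C*x) * (g x + C))) (at x)"
          by (rule DERIV_cong[OF DERIV_mult[OF dSx E]]) (simp add: algebra_simps)
        have nn: "S x \<ge> 0" "I1 x \<ge> 0" "I2 x \<ge> 0" "I12 x \<ge> 0" "R x \<ge> 0" using nonneg[of x] x by auto
        have mm: "S x \<le> M" "I1 x \<le> M" "I2 x \<le> M" "I12 x \<le> M" "R x \<le> M" using M[of x] x by auto
        have "g x \<ge> -C"
          using g_lower[OF nn(1) mm(1) nn(2) mm(2) nn(3) mm(3) nn(4) mm(4) nn(5) mm(5) p(1,2,3,4,5,6,7), of \<mu>0]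
          unfolding g_def C_def by simp
        then have "S x * exp (C*x) * (g x + C) \<ge> 0" using nn by simp
        with D show ?thesis by blast
      qed
      show "continuous_on {0..t} (\<lambda>s. S s * exp (C* s))" by (intro continuous_intros cont(1))
    qed
    then have "S 0 \<le> S t * exp (C*t)" by simp
    with init(1) have "S t * exp (C*t) > 0" by linarith
    then show ?thesis by (simp add: zero_less_mult_iff)
  qed
  have dSa: "(S has_real_derivative ((b * (1 - N t / K) - \<alpha>1 * I1 t - \<alpha>2 * I2 t
          - (\<beta>1 + \<beta>2 + \<alpha>3) * I12 t - \<mu>0) * S t)) (at t)" if "t > 0" for t
    unfolding Nt by (rule deriv_at_of_within[OF dS[OF less_imp_le[OF that]] that])
  have dI1a: "(I1 has_real_derivative ((b * (1 - N t / K) + \<alpha>1 * S t - \<eta>1 * I12 t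
          - \<gamma>1 * I2 t - \<mu>1) * I1 t + \<beta>1 * S t * I12 t)) (at t)" if "t > 0" for t
    unfolding Nt by (rule deriv_at_of_within[OF dI1[OF less_imp_le[OF that]] that])
  have dI2a: "(I2 has_real_derivative ((b * (1 - N t / K) + \<alpha>2 * S t - \<eta>2 * I12 t
          - \<gamma>2 * I1 t - \<mu>2) * I2 t + \<beta>2 * S t * I12 t)) (at t)" if "t > 0" for t
    unfolding Nt by (rule deriv_at_of_within[OF dI2[OF less_imp_le[OF that]] that])
  have dI12a: "(I12 has_real_derivative ((b * (1 - N t / K) + \<alpha>3 * S t + \<eta>1 * I1 t
          + \<eta>2 * I2 t - \<mu>3) * I12 t + (\<gamma>1 + \<gamma>2) * I1 t * I2 t)) (at t)" if "t > 0" for t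
    unfolding Nt by (rule deriv_at_of_within[OF dI12[OF less_imp_le[OF that]] that])
  have dRa: "(R has_real_derivative ((b * (1 - N t / K) - \<mu>4') * R t
          + \<rho>1 * I1 t + \<rho>2 * I2 t + \<rho>3 * I12 t)) (at t)" if "t > 0" for t
    unfolding Nt by (rule deriv_at_of_within[OF dR[OF less_imp_le[OF that]] that])
  define N' where "N' = (\<lambda>t. b*(1 - N t/K)*N t - \<mu>0*S t - \<mu>1'*I1 t - \<mu>2'*I2 t - \<mu>3'*I12 t - \<mu>4'*R t)"
  have dNa: "(N has_real_derivative N' t) (at t)" if "t > 0" for t
  proof -
    note X = DERIV_add[OF DERIV_add[OF DERIV_add[OF DERIV_add[OF dSa[OF that] dI1a[OF that]] dI2a[OF that]] dI12a[OF that]] dRa[OF that]]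
    show ?thesis unfolding N_def
      by (rule DERIV_cong[OF X], subst N_ident[OF mu_def]) (simp add: N'_def Nt)
  qed
  have Nbar: "\<exists>T. \<forall>t\<ge>T. N t \<le> S2 + \<epsilon>" if eps: "\<epsilon> > 0" for \<epsilon>
  proof (rule barrier[of 1 N N' "(b/K)*(S2+\<epsilon>)*\<epsilon>"])
    show "(N has_real_derivative N' t) (at t)" if "t \<ge> 1" for t using dNa that by simp
    show "(b/K)*(S2+\<epsilon>)*\<epsilon> > 0" using p S2pos eps by simp
    show "N' t \<le> - ((b/K)*(S2+\<epsilon>)*\<epsilon>)" if "t \<ge> 1" "S2 + \<epsilon> \<le> N t" for t
    proof -
      have nn: "S t \<ge> 0" "I1 t \<ge> 0" "I2 t \<ge> 0" "I12 t \<ge> 0" "R t \<ge> 0" using nonneg[of t] that by auto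
      show ?thesis unfolding N'_def
        by (rule N_bound[OF Nt nn]) (use standing p S2pos eps that in \<open>simp_all add: S2_def\<close>)
    qed
  qed
  define V where "V = (\<lambda>t. I1 t + I2 t + I12 t + R t)"
  have NSV: "N t = S t + V t" for t by (simp add: N_def V_def)
  have Vnn: "V t \<ge> 0" if "t \<ge> 0" for t using nonneg[OF that] by (simp add: V_def)
  define mm where "mm = min ((\<mu>1' - \<mu>0) / \<alpha>1) (min ((\<mu>2' - \<mu>0) / \<alpha>2) ((\<mu>3' - \<mu>0) / (\<alpha>3 + \<beta>1 + \<beta>2)))"
  have S2mm: "S2 < mm" using threshold unfolding S2_def mm_def by simp
  define \<epsilon>0 where "\<epsilon>0 = (mm - S2) / 2"
  have e0: "\<epsilon>0 > 0" using S2mm by (simp add: \<epsilon>0_def)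
  define \<delta> where "\<delta> = min (min (\<epsilon>0*\<alpha>1) (\<epsilon>0*\<alpha>2)) (min (\<epsilon>0*(\<alpha>3 + \<beta>1 + \<beta>2)) (\<mu>4' - \<mu>0))"
  have mmle: "mm \<le> (\<mu>1' - \<mu>0) / \<alpha>1" "mm \<le> (\<mu>2' - \<mu>0) / \<alpha>2" "mm \<le> (\<mu>3' - \<mu>0) / (\<alpha>3 + \<beta>1 + \<beta>2)"
    by (simp_all add: mm_def)
  have e0eq: "S2 + \<epsilon>0 = mm - \<epsilon>0" by (simp add: \<epsilon>0_def field_simps)
  have d0: "\<delta> > 0" using e0 p standing by (simp add: \<delta>_def)
  have sc1: "(S2+\<epsilon>0)*\<alpha>1 \<le> \<mu>1' - \<mu>0 - \<delta>"
  proof -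
    have "(S2+\<epsilon>0)*\<alpha>1 \<le> (\<mu>1' - \<mu>0) - \<epsilon>0*\<alpha>1"
      by (rule scale_lemma) (use mmle e0eq p in \<open>linarith | simp\<close>)+
    moreover have "\<delta> \<le> \<epsilon>0*\<alpha>1" by (simp add: \<delta>_def)
    ultimately show ?thesis by linarith
  qed
  have sc2: "(S2+\<epsilon>0)*\<alpha>2 \<le> \<mu>2' - \<mu>0 - \<delta>"
  proof -
    have "(S2+\<epsilon>0)*\<alpha>2 \<le> (\<mu>2' - \<mu>0) - \<epsilon>0*\<alpha>2"
      by (rule scale_lemma) (use mmle e0eq p in \<open>linarith | simp\<close>)+
    moreover have "\<delta> \<le> \<epsilon>0*\<alpha>2" by (simp add: \<delta>_def)
    ultimately show ?thesis by linarith
  qed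
  have sc3: "(S2+\<epsilon>0)*(\<alpha>3 + \<beta>1 + \<beta>2) \<le> \<mu>3' - \<mu>0 - \<delta>"
  proof -
    have "(S2+\<epsilon>0)*(\<alpha>3 + \<beta>1 + \<beta>2) \<le> (\<mu>3' - \<mu>0) - \<epsilon>0*(\<alpha>3 + \<beta>1 + \<beta>2)"
      by (rule scale_lemma) (use mmle e0eq p in \<open>linarith | simp\<close>)+
    moreover have "\<delta> \<le> \<epsilon>0*(\<alpha>3 + \<beta>1 + \<beta>2)" by (simp add: \<delta>_def)
    ultimately show ?thesis by linarith
  qed
  have sc4: "\<delta> \<le> \<mu>4' - \<mu>0" by (simp add: \<delta>_def)
  obtain T where T: "\<And>t. t \<ge> T \<Longrightarrow> N t \<le> S2 + \<epsilon>0" using Nbar[OF e0] by blast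
  define T0 where "T0 = max T 1"
  have T0: "T0 \<ge> 1" "T0 \<ge> T" by (auto simp: T0_def)
  define Z where "Z = (\<lambda>s. V s * exp (\<delta> * s) / S s)"
  define DS where "DS = (\<lambda>t. (b * (1 - N t / K) - \<alpha>1 * I1 t - \<alpha>2 * I2 t - (\<beta>1 + \<beta>2 + \<alpha>3) * I12 t - \<mu>0) * S t)"
  have Zder: "\<exists>y. (Z has_real_derivative y) (at x) \<and> y \<le> 0" if x: "x \<ge> T0" for x
  proof -
    have x0: "x > 0" using x T0 by simp
    note dV = DERIV_add[OF DERIV_add[OF DERIV_add[OF dI1a[OF x0] dI2a[OF x0]] dI12a[OF x0]] dRa[OF x0]]
    have E: "((\<lambda>s. exp (\<delta> * s)) has_real_derivative exp (\<delta> * x) * \<delta>) (at x)"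
      by (auto intro!: derivative_eq_intros)
    have Sx: "S x > 0" using Spos x0 by simp
    note D = DERIV_divide[OF DERIV_mult[OF dV E] dSa[OF x0]]
    define DV where "DV = ((b * (1 - N x / K) + \<alpha>1 * S x - \<eta>1 * I12 x - \<gamma>1 * I2 x - \<mu>1) * I1 x + \<beta>1 * S x * I12 x)
      + ((b * (1 - N x / K) + \<alpha>2 * S x - \<eta>2 * I12 x - \<gamma>2 * I1 x - \<mu>2) * I2 x + \<beta>2 * S x * I12 x)
      + ((b * (1 - N x / K) + \<alpha>3 * S x + \<eta>1 * I1 x + \<eta>2 * I2 x - \<mu>3) * I12 x + (\<gamma>1 + \<gamma>2) * I1 x * I2 x)
      + ((b * (1 - N x / K) - \<mu>4') * R x + \<rho>1 * I1 x + \<rho>2 * I2 x + \<rho>3 * I12 x)"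
    define Q where "Q = N x*(\<alpha>1*I1 x + \<alpha>2*I2 x + (\<alpha>3+\<beta>1+\<beta>2)*I12 x) - (\<mu>1'-\<mu>0)*I1 x - (\<mu>2'-\<mu>0)*I2 x
       - (\<mu>3'-\<mu>0)*I12 x - (\<mu>4'-\<mu>0)*R x"
    have VI: "DV * S x - V x * DS x = S x * Q"
      unfolding DV_def DS_def V_def Q_def Nt[of x] by (rule V_ident[OF mu_def])
    have nn: "S x \<ge> 0" "I1 x \<ge> 0" "I2 x \<ge> 0" "I12 x \<ge> 0" "R x \<ge> 0" using nonneg[of x] x0 by auto
    have Qb: "Q + \<delta> * V x \<le> 0"
      using Q_bound[of "N x" "S2+\<epsilon>0" "I1 x" "I2 x" "I12 x" "R x" \<alpha>1 \<alpha>2 "\<alpha>3+\<beta>1+\<beta>2" \<mu>1' \<mu>0 \<delta> \<mu>2' \<mu>3' \<mu>4']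
        nn T[of x] T0 x p sc1 sc2 sc3 sc4 unfolding Q_def V_def Nt[of x] by simp
    have "(DV * exp (\<delta> * x) + exp (\<delta> * x) * \<delta> * V x) * S x - V x * exp (\<delta> * x) * DS x
       = exp (\<delta> * x) * (DV * S x - V x * DS x + \<delta> * V x * S x)" by (simp add: algebra_simps)
    also have "\<dots> = exp (\<delta> * x) * S x * (Q + \<delta> * V x)" using VI by (simp add: algebra_simps)
    also have "\<dots> \<le> 0" using Qb Sx by (simp add: mult_nonneg_nonpos)
    finally have num: "(DV * exp (\<delta> * x) + exp (\<delta> * x) * \<delta> * V x) * S x - V x * exp (\<delta> * x) * DS x \<le> 0" .
    have "((DV * exp (\<delta> * x) + exp (\<delta> * x) * \<delta> * V x) * S x - V x * exp (\<delta> * x) * DS x) / (S x * S x) \<le> 0"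
      using num Sx by (simp add: divide_nonpos_pos)
    moreover have "(Z has_real_derivative ((DV * exp (\<delta> * x) + exp (\<delta> * x) * \<delta> * V x) * S x - V x * exp (\<delta> * x) * DS x) / (S x * S x)) (at x)"
      using D Sx unfolding DV_def DS_def Z_def V_def by simp
    ultimately show ?thesis by blast
  qed
  have Zmono: "Z t \<le> Z T0" if "t \<ge> T0" for t
  proof (rule DERIV_nonpos_imp_decreasing_open[OF that])
    show "\<exists>y. (Z has_real_derivative y) (at x) \<and> y \<le> 0" if "T0 < x" "x < t" for x
      using Zder that by simp
    show "continuous_on {T0..t} Z"
      by (rule continuous_at_imp_continuous_on) (use Zder in \<open>force intro: DERIV_isCont\<close>)
  qed
  define C0 where "C0 = Z T0 * (S2 + \<epsilon>0)"
  have Vdec: "V t \<le> C0 * exp (-\<delta> * t)" if t: "t \<ge> T0" for t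
  proof -
    have t0: "t \<ge> 0" using t T0 by simp
    have St: "S t > 0" using Spos[OF t0] .
    have "V t = Z t * (S t * exp (-\<delta> * t))"
      using St by (simp add: Z_def field_simps exp_minus mult_exp_exp)
    also have "\<dots> \<le> Z T0 * ((S2 + \<epsilon>0) * exp (-\<delta> * t))"
    proof (rule mult_mono)
      show "Z t \<le> Z T0" using Zmono[OF t] .
      have "S t \<le> N t" using Vnn[OF t0] NSV[of t] by simp
      also have "\<dots> \<le> S2 + \<epsilon>0" using T[of t] t T0 by simp
      finally show "S t * exp (-\<delta> * t) \<le> (S2 + \<epsilon>0) * exp (-\<delta> * t)" by simp
      show "0 \<le> Z T0" using Vnn[of T0] Spos[of T0] T0 by (simp add: Z_def)
      show "0 \<le> S t * exp (-\<delta> * t)" using St by simp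
    qed
    finally show ?thesis by (simp add: C0_def mult.assoc)
  qed
  have glim: "((\<lambda>t. C0 * exp (-\<delta> * t)) \<longlongrightarrow> 0) at_top" by (rule exp_decay[OF d0])
  have ev_le: "eventually (\<lambda>t. f t \<le> C0 * exp (-\<delta> * t)) at_top"
    if "\<And>t. t \<ge> 0 \<Longrightarrow> f t \<le> V t" for f :: "real \<Rightarrow> real"
    unfolding eventually_at_top_linorder
  proof (rule exI[of _ T0], intro allI impI)
    fix t assume tt: "t \<ge> T0"
    then have t0: "t \<ge> 0" using T0 by simp
    show "f t \<le> C0 * exp (-\<delta> * t)" using that[OF t0] Vdec[OF tt] by linarith
  qed
  have ev_ge: "eventually (\<lambda>t. 0 \<le> f t) at_top" if "\<And>t. t \<ge> 0 \<Longrightarrow> 0 \<le> f t" for f :: "real \<Rightarrow> real"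
    unfolding eventually_at_top_linorder by (rule exI[of _ 0]) (use that in auto)
  have lI1: "(I1 \<longlongrightarrow> 0) at_top"
    by (rule tendsto_sandwich[OF ev_ge ev_le tendsto_const glim]) (use nonneg in \<open>auto simp: V_def\<close>)
  have lI2: "(I2 \<longlongrightarrow> 0) at_top"
    by (rule tendsto_sandwich[OF ev_ge ev_le tendsto_const glim]) (use nonneg in \<open>auto simp: V_def\<close>)
  have lI12: "(I12 \<longlongrightarrow> 0) at_top"
    by (rule tendsto_sandwich[OF ev_ge ev_le tendsto_const glim]) (use nonneg in \<open>auto simp: V_def\<close>)
  have lR: "(R \<longlongrightarrow> 0) at_top"
    by (rule tendsto_sandwich[OF ev_ge ev_le tendsto_const glim]) (use nonneg in \<open>auto simp: V_def\<close>)
  define hf where "hf = (\<lambda>t. (b/K)*V t + (\<alpha>1*I1 t + \<alpha>2*I2 t + (\<alpha>3+\<beta>1+\<beta>2)*I12 t))"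
  have hlim: "(hf \<longlongrightarrow> 0) at_top"
  proof -
    have "(hf \<longlongrightarrow> (b/K)*(0+0+0+0) + (\<alpha>1*0 + \<alpha>2*0 + (\<alpha>3+\<beta>1+\<beta>2)*0)) at_top"
      unfolding hf_def V_def by (intro tendsto_intros lI1 lI2 lI12 lR)
    then show ?thesis by simp
  qed
  have bK: "(b/K)*S2 = b - \<mu>0" using p by (simp add: S2_def)
  have B0: "b*(1 - n/K) = b - (b/K)*n" for n using p by (simp add: field_simps)
  have lower: "\<exists>T. \<forall>t\<ge>T. S t \<ge> S2 - \<epsilon>" if e: "0 < \<epsilon>" "\<epsilon> < S2" for \<epsilon>
  proof -
    define c where "c = (b/K)*\<epsilon>/2"
    have c0: "c > 0" using p e by (simp add: c_def)
    have "eventually (\<lambda>t. hf t < c) at_top" using order_tendstoD(2)[OF hlim c0] .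
    then obtain T1 where T1: "\<And>t. t \<ge> T1 \<Longrightarrow> hf t < c" by (auto simp: eventually_at_top_linorder)
    define T2 where "T2 = max T1 1"
    define coefS where "coefS = (\<lambda>t. b * (1 - N t / K) - \<alpha>1 * I1 t - \<alpha>2 * I2 t - (\<beta>1 + \<beta>2 + \<alpha>3) * I12 t - \<mu>0)"
    have "\<exists>T. \<forall>t\<ge>T. (\<lambda>t. - ln (S t)) t \<le> - ln (S2 - \<epsilon>)"
    proof (rule barrier[of T2 "\<lambda>t. - ln (S t)" "\<lambda>t. - coefS t" c])
      show "((\<lambda>t. - ln (S t)) has_real_derivative - coefS t) (at t)" if "t \<ge> T2" for t
      proof -
        have t0: "t > 0" using that by (simp add: T2_def)
        have St: "S t > 0" using Spos t0 by simp
        have "((\<lambda>t. ln (S t)) has_real_derivative inverse (S t) * (coefS t * S t)) (at t)"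
          using DERIV_chain2[OF DERIV_ln[OF St] dSa[OF t0]] unfolding coefS_def by (simp add: o_def)
        then have "((\<lambda>t. - ln (S t)) has_real_derivative - (inverse (S t) * (coefS t * S t))) (at t)"
          by (rule DERIV_minus)
        moreover have "inverse (S t) * (coefS t * S t) = coefS t" using St by (simp add: field_simps)
        ultimately show ?thesis by simp
      qed
      show "c > 0" by (rule c0)
      show "- coefS t \<le> - c" if tt: "t \<ge> T2" "- ln (S2 - \<epsilon>) \<le> - ln (S t)" for t
      proof -
        have t0: "t > 0" using tt by (simp add: T2_def)
        have St: "S t > 0" using Spos t0 by simp
        have "ln (S t) \<le> ln (S2 - \<epsilon>)" using tt by simp
        then have Sle: "S t \<le> S2 - \<epsilon>" using St e by simp
        have i1: "(b/K)*(S2 - S t) = b - \<mu>0 - (b/K)*S t" using bK by (simp add: right_diff_distrib)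
        have i2: "(b/K)*(S t + V t) = (b/K)*S t + (b/K)*V t" by (simp add: distrib_left)
        have id: "coefS t = (b/K)*(S2 - S t) - hf t"
          unfolding coefS_def hf_def B0 NSV using i1 i2 by simp
        define X where "X = (b/K)*(S2 - S t)"
        define Y where "Y = (b/K)*\<epsilon>"
        have "X \<ge> Y" unfolding X_def Y_def using Sle p by (intro mult_left_mono) auto
        moreover have "hf t < c" using T1 tt by (simp add: T2_def)
        moreover have "c = Y/2" by (simp add: c_def Y_def)
        moreover have "coefS t = X - hf t" using id by (simp add: X_def)
        ultimately show ?thesis by linarith
      qed
    qed
    then obtain T3 where T3: "\<And>t. t \<ge> T3 \<Longrightarrow> - ln (S t) \<le> - ln (S2 - \<epsilon>)" by auto
    show ?thesis
    proof (intro exI[of _ "max T3 0"] allI impI)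
      fix t assume "t \<ge> max T3 0"
      then have "- ln (S t) \<le> - ln (S2 - \<epsilon>)" "S t > 0" using T3 Spos by auto
      then show "S t \<ge> S2 - \<epsilon>" using e by simp
    qed
  qed
  have upper: "\<exists>T. \<forall>t\<ge>T. S t \<le> S2 + \<epsilon>" if eps: "\<epsilon> > 0" for \<epsilon>
  proof -
    obtain T where T: "\<And>t. t \<ge> T \<Longrightarrow> N t \<le> S2 + \<epsilon>" using Nbar[OF eps] by blast
    show ?thesis
    proof (intro exI[of _ "max T 0"] allI impI)
      fix t assume "t \<ge> max T 0"
      then have "N t \<le> S2 + \<epsilon>" "V t \<ge> 0" using T Vnn by auto
      then show "S t \<le> S2 + \<epsilon>" using NSV[of t] by linarith
    qed
  qed
  have lS: "(S \<longlongrightarrow> S2) at_top"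
  proof (rule order_tendstoI)
    fix a assume a: "a < S2"
    define \<epsilon> where "\<epsilon> = min (S2 - a) S2 / 2"
    have "0 < \<epsilon>" "\<epsilon> < S2" using a S2pos by (auto simp: \<epsilon>_def)
    from lower[OF this] obtain T where T: "\<forall>t\<ge>T. S t \<ge> S2 - \<epsilon>" by blast
    moreover have "S2 - \<epsilon> > a"
    proof -
      have "min (S2 - a) S2 \<le> S2 - a" "min (S2 - a) S2 > 0" using a S2pos by auto
      then show ?thesis unfolding \<epsilon>_def using a by (smt (verit) field_sum_of_halves)
    qed
    ultimately show "eventually (\<lambda>t. a < S t) at_top"
      unfolding eventually_at_top_linorder by (meson less_le_trans)
  next
    fix a assume a: "a > S2"
    have "(a - S2)/2 > 0" using a by simp
    from upper[OF this] obtain T where T: "\<forall>t\<ge>T. S t \<le> S2 + (a - S2)/2" by blast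
    show "eventually (\<lambda>t. S t < a) at_top"
      unfolding eventually_at_top_linorder
    proof (intro exI[of _ T] allI impI)
      fix t assume "t \<ge> T"
      with T have "S t \<le> S2 + (a - S2)/2" by blast
      then show "S t < a" using a by (simp add: field_simps)
    qed
  qed
  show ?thesis using lI1 lI2 lI12 lR lS by (simp add: S2_def)
qed

end
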